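(* Let $0<M<\frac{1}{2(\ln 4-1)}$ and let $f=h+\overline{g}\in\mathcal{P}^{0}_{\mathcal{H}}(M)$ with $$f(z)=z+\sum_{n=2}^{\infty}a_nz^n+\overline{\sum_{n=2}^{\infty}b_nz^n},\qquad z\in\mathbb{D}.$$ Then $$|z|+|f(z)|+\sum_{n=2}^{\infty}(|a_n|+|b_n|)|z|^n\leq d\left(f(0),\partial f(\mathbb{D})\right)$$ for all $|z|=r\leq r_{M}$, where $r_{M}$ is the unique root in $(0,1)$ of the equation $$2r+4M\left(r+(1-r)\log(1-r)\right)-1-2M(1-2\log 2)=0.$$ The radius $r_M$ is the best possible.
   Context: $\mathbb{D}=\{z\in\mathbb{C}:|z|<1\}$. $\mathcal{H}_0$ denotes the class of complex-valued harmonic mappings $f=h+\overline{g}$ on $\mathbb{D}$, with $h,g$ analytic in $\mathbb{D}$, normalized by $h(0)=0$, $h'(0)=1$, $g(0)=0$, $g'(0)=0$. For $M>0$, $$\mathcal{P}^{0}_{\mathcal{H}}(M)=\{f=h+\overline{g}\in\mathcal{H}_0:\ \operatorname{Re}(zh''(z))>-M+|zg''(z)|\ \text{for all } z\in\mathbb{D}\}.$$ $d(f(0),\partial f(\mathbb{D}))$ denotes the Euclidean distance from $f(0)$ to the boundary of $f(\mathbb{D})$, i.e. $\liminf_{|z|\to 1}|f(z)-f(0)|$. "Best possible" means the radius cannot be replaced by any larger number (the extremal function being $f_M(z)=z+2M\sum_{n\ge2}\frac{z^n}{n(n-1)}$). *)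

theory Defs
  imports "HOL-Complex_Analysis.Complex_Analysis"
begin

definition PH0 :: "real \<Rightarrow> (complex \<Rightarrow> complex) \<Rightarrow> (complex \<Rightarrow> complex) \<Rightarrow> bool" where
  "PH0 M h g \<longleftrightarrow>
     h holomorphic_on ball 0 1 \<and> g holomorphic_on ball 0 1 \<and>
     h 0 = 0 \<and> deriv h 0 = 1 \<and> g 0 = 0 \<and> deriv g 0 = 0 \<and>
     (\<forall>z\<in>ball 0 1. Re (z * (deriv ^^ 2) h z) > - M + cmod (z * (deriv ^^ 2) g z))"

definition harm :: "(complex \<Rightarrow> complex) \<Rightarrow> (complex \<Rightarrow> complex) \<Rightarrow> complex \<Rightarrow> complex" where
  "harm h g z = h z + cnj (g z)"

definition tcoeff :: "(complex \<Rightarrow> complex) \<Rightarrow> nat \<Rightarrow> complex" where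
  "tcoeff h n = (deriv ^^ n) h 0 / of_nat (fact n)"

text \<open>d(f(0), boundary f(D)) = liminf_{|z| \<rightarrow> 1^-} |f z - f 0|.\<close>
definition bdist :: "(complex \<Rightarrow> complex) \<Rightarrow> ereal" where
  "bdist f = Liminf (filtercomap norm (at_left (1::real))) (\<lambda>z. ereal (cmod (f z - f 0)))"

definition bohr_lhs :: "(complex \<Rightarrow> complex) \<Rightarrow> (complex \<Rightarrow> complex) \<Rightarrow> complex \<Rightarrow> real" where
  "bohr_lhs h g z = cmod z + cmod (harm h g z)
     + (\<Sum>n. (cmod (tcoeff h (n+2)) + cmod (tcoeff g (n+2))) * cmod z ^ (n+2))"

definition rM_eq :: "real \<Rightarrow> real \<Rightarrow> real" where
  "rM_eq M r = 2*r + 4*M*(r + (1-r) * ln (1-r)) - 1 - 2*M*(1 - 2 * ln 2)"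

definition rM :: "real \<Rightarrow> real" where
  "rM M = (THE r. 0 < r \<and> r < 1 \<and> rM_eq M r = 0)"

definition fM_h :: "real \<Rightarrow> complex \<Rightarrow> complex" where
  "fM_h M z = z + 2 * of_real M * (\<Sum>n. z ^ (n+2) / of_nat ((n+2) * (n+1)))"

end

theory Submission
  imports Defs
begin


lemma S_sums_complex:
  fixes w :: complex assumes "norm w < 1"
  shows "(\<lambda>n. w ^ (n+2) / of_nat ((n+2) * (n+1))) sums (w + (1-w) * ln (1-w))"
proof -
  define L where "L = ln (1 - w)"
  have "norm (-w) < 1" using assms by simp
  from Ln_series'[OF this] have s0: "(\<lambda>n. - (w^n) / of_nat n) sums L"
    by (simp add: L_def)
  define f where "f = (\<lambda>n. - (w^n) / (of_nat n :: complex))"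
  have s1: "(\<lambda>n. f (Suc n)) sums L" using s0 unfolding f_def by (subst sums_Suc_iff) simp
  have s2: "(\<lambda>n. f (Suc (Suc n))) sums (L - f 1)" using s1 by (subst sums_Suc_iff) simp
  have A: "(\<lambda>n. w ^ (n+2) / of_nat (n+1)) sums (-w * L)"
    using sums_mult[OF s1, of "-w"] by (simp add: f_def power_Suc mult_ac)
  have B: "(\<lambda>n. - (w ^ (n+2)) / of_nat (n+2)) sums (L + w)"
    using s2 by (simp add: f_def add_ac numeral_2_eq_2)
  have "(\<lambda>n. w ^ (n+2) / of_nat (n+1) + - (w ^ (n+2)) / of_nat (n+2)) sums (-w * L + (L + w))"
    by (rule sums_add[OF A B])
  moreover have "w ^ (n+2) / of_nat (n+1) + - (w ^ (n+2)) / of_nat (n+2) = w ^ (n+2) / of_nat ((n+2) * (n+1))" for n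
  proof -
    have "(of_nat (n+1) :: complex) \<noteq> 0" "(of_nat (n+2) :: complex) \<noteq> 0" by (simp_all del: of_nat_Suc add: of_nat_eq_0_iff)
    thus ?thesis by (simp add: field_simps)
  qed
  ultimately show ?thesis by (simp add: L_def algebra_simps)
qed

lemma S_sums_real:
  fixes x :: real assumes "\<bar>x\<bar> < 1"
  shows "(\<lambda>n. x ^ (n+2) / of_nat ((n+2) * (n+1))) sums (x + (1-x) * ln (1-x))"
proof -
  have "norm (complex_of_real x) < 1" using assms by simp
  from S_sums_complex[OF this]
  have "(\<lambda>n. complex_of_real (x ^ (n+2) / of_nat ((n+2) * (n+1)))) sums complex_of_real (x + (1-x) * ln (1-x))"
  proof -
    have "ln (1 - complex_of_real x) = complex_of_real (ln (1 - x))"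
      using assms by (metis Ln_of_real diff_gt_0_iff_gt abs_less_iff of_real_1 of_real_diff)
    moreover assume "(\<lambda>n. complex_of_real x ^ (n+2) / of_nat ((n+2) * (n+1))) sums (complex_of_real x + (1 - complex_of_real x) * ln (1 - complex_of_real x))"
    ultimately show ?thesis by simp
  qed
  thus ?thesis by (simp only: sums_of_real_iff)
qed

lemma g_deriv:
  fixes r :: real assumes "r < 1"
  shows "((\<lambda>r. r + (1-r) * ln (1-r)) has_real_derivative (- ln (1-r))) (at r)"
proof -
  have da: "((\<lambda>r. 1 - r) has_real_derivative (-1)) (at r)"
    by (auto intro!: derivative_eq_intros)
  have db: "((\<lambda>r. ln (1 - r)) has_real_derivative (-1/(1-r))) (at r)"
    using assms by (auto intro!: derivative_eq_intros simp: field_simps)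
  have "((\<lambda>r. r + (1-r) * ln (1-r)) has_real_derivative (1 + ((-1) * ln (1-r) + (1-r) * (-1/(1-r))))) (at r)"
    using DERIV_add[OF DERIV_ident DERIV_mult[OF da db]] by simp
  moreover have "1 + ((-1) * ln (1-r) + (1-r) * (-1/(1-r))) = - ln (1-r)" using assms by simp
  ultimately show ?thesis by simp
qed

lemma rM_eq_deriv:
  assumes "r < 1"
  shows "(rM_eq M has_real_derivative (2 - 4*M*ln(1-r))) (at r)"
proof -
  have e: "rM_eq M = (\<lambda>r. 2*r + 4*M*(r + (1-r) * ln (1-r)) - (1 + 2*M*(1 - 2 * ln 2)))"
    unfolding rM_eq_def by (auto simp: algebra_simps)
  show ?thesis unfolding e
    using DERIV_diff[OF DERIV_add[OF DERIV_cmult[OF DERIV_ident, of 2] DERIV_cmult[OF g_deriv[OF assms], of "4*M"]] DERIV_const[of "1 + 2*M*(1 - 2 * ln 2)"]]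
    by simp
qed

lemma rM_eq_strict_mono:
  assumes M: "M > 0" and xy: "0 \<le> x" "x < y" "y < 1"
  shows "rM_eq M x < rM_eq M y"
proof (rule DERIV_pos_imp_increasing[OF xy(2)])
  fix t assume t0: "x \<le> t" "t \<le> y"
  hence t: "x \<le> t \<and> t \<le> y" by simp
  have "ln (1-t) \<le> 0" using t xy by simp
  hence "M*ln(1-t) \<le> 0" using M by (intro mult_nonneg_nonpos) auto
  hence "2 - 4*M*ln(1-t) > 0" by linarith
  thus "\<exists>d. (rM_eq M has_real_derivative d) (at t) \<and> 0 < d" using rM_eq_deriv[of t M] t xy by auto
qed

lemma rM_props:
  assumes M: "0 < M" and M2: "M < 1 / (2 * (ln 4 - 1))"
  shows "\<exists>!r. 0 < r \<and> r < 1 \<and> rM_eq M r = 0"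
    and "0 < rM M" "rM M < 1" "rM_eq M (rM M) = 0"
proof -
  have l4: "ln (4::real) - 1 > 0"
  proof (rule ccontr)
    assume "\<not> ln (4::real) - 1 > 0"
    hence "1 / (2 * (ln 4 - 1)) \<le> (0::real)" by (simp add: divide_nonpos_nonneg divide_nonneg_nonpos)
    thus False using M M2 by linarith
  qed
  have ln4: "ln (4::real) = 2 * ln 2"
    using ln_realpow[of 2 2] by simp
  have "M * (2 * (ln 4 - 1)) < 1" using M2 l4 by (simp add: field_simps)
  hence f0: "rM_eq M 0 < 0" unfolding rM_eq_def using ln4 by (simp add: algebra_simps)
  have "ln (1/2::real) = - ln 2" by (simp add: ln_div)
  hence fh: "rM_eq M (1/2) = 2*M*ln 2" unfolding rM_eq_def by (simp add: algebra_simps)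
  have fh': "rM_eq M (1/2) > 0" using fh M by simp
  have cont: "\<forall>x. 0 \<le> x \<and> x \<le> 1/2 \<longrightarrow> isCont (rM_eq M) x"
    using rM_eq_deriv DERIV_isCont by force
  obtain r where r: "0 \<le> r" "r \<le> 1/2" "rM_eq M r = 0"
    using IVT[of "rM_eq M" 0 0 "1/2", OF less_imp_le[OF f0] less_imp_le[OF fh'] _ cont] by auto
  have rp: "0 < r" using r f0 by (cases "r = 0") auto
  have ex: "\<exists>!r. 0 < r \<and> r < 1 \<and> rM_eq M r = 0"
  proof (rule ex1I[of _ r])
    show "0 < r \<and> r < 1 \<and> rM_eq M r = 0" using r rp by simp
    fix s assume s: "0 < s \<and> s < 1 \<and> rM_eq M s = 0"
    show "s = r"
    proof (rule ccontr)
      assume "s \<noteq> r"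
      hence "s < r \<or> r < s" by auto
      thus False using rM_eq_strict_mono[OF M, of s r] rM_eq_strict_mono[OF M, of r s] s r rp by auto
    qed
  qed
  show "\<exists>!r. 0 < r \<and> r < 1 \<and> rM_eq M r = 0" by (rule ex)
  have "0 < rM M \<and> rM M < 1 \<and> rM_eq M (rM M) = 0"
    unfolding rM_def by (rule theI'[OF ex])
  thus "0 < rM M" "rM M < 1" "rM_eq M (rM M) = 0" by auto
qed


lemma frac_mono:
  fixes x y :: real assumes "0 \<le> x" "x \<le> y" shows "x/(1+x) \<le> y/(1+y)"
proof -
  have "x*(1+y) \<le> y*(1+x)" using assms by (simp add: algebra_simps)
  moreover have "1+x > 0" "1+y > 0" using assms by auto
  ultimately show ?thesis by (simp add: divide_simps)
qed

lemma Re_ofreal_mult: "Re (complex_of_real c * z) = c * Re z" by simp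

lemma re_frac_bound:
  fixes u :: complex assumes "norm u < 1"
  shows "Re (u / (1 - u)) \<ge> - norm u / (1 + norm u)"
proof -
  define a where "a = Re u"
  define b where "b = Im u"
  define s where "s = norm u"
  have s2: "s^2 = a^2 + b^2" unfolding s_def a_def b_def by (simp add: cmod_power2)
  have as: "-s \<le> a" unfolding s_def a_def using abs_Re_le_cmod[of u] by linarith
  have s1: "s < 1" "0 \<le> s" using assms s_def by auto
  have a1: "a < 1" unfolding a_def using abs_Re_le_cmod[of u] assms by linarith
  have D: "(1-a)^2 + b^2 > 0" using a1 by (simp add: add_pos_nonneg)
  have re: "Re (u / (1 - u)) = (a*(1-a) - b^2) / ((1-a)^2 + b^2)"
    by (simp add: Re_divide a_def b_def power2_eq_square)
  have key: "(a*(1-a) - b^2) * (1+s) + s*((1-a)^2 + b^2) = (1-s)*(a+s)"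
    using s2 by (simp add: algebra_simps power2_eq_square)
  have "(1-s)*(a+s) \<ge> 0" using as s1 by simp
  hence "(a*(1-a) - b^2) * (1+s) \<ge> - s*((1-a)^2 + b^2)" using key by linarith
  hence "(a*(1-a) - b^2) / ((1-a)^2 + b^2) \<ge> - s/(1+s)"
    using D s1 by (simp add: field_simps)
  thus ?thesis using re s_def by simp
qed




lemma fM_closed:
  assumes "norm z < 1"
  shows "fM_h M z = z + 2 * of_real M * (z + (1-z) * ln (1-z))"
  using S_sums_complex[OF assms] by (simp add: fM_h_def sums_iff)

lemma fM_real:
  fixes x :: real assumes "\<bar>x\<bar> < 1"
  shows "fM_h M (of_real x) = of_real (x + 2*M*(x + (1-x) * ln (1-x)))"
proof -
  have "(\<lambda>n. complex_of_real (x ^ (n+2) / of_nat ((n+2)*(n+1)))) sums of_real (x + (1-x) * ln (1-x))"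
    by (rule sums_of_real[OF S_sums_real[OF assms]])
  moreover have "(\<lambda>n. complex_of_real (x ^ (n+2) / of_nat ((n+2)*(n+1)))) = (\<lambda>n. complex_of_real x ^ (n+2) / of_nat ((n+2)*(n+1)))"
    by (rule ext) (simp only: of_real_divide of_real_power of_real_of_nat_eq)
  ultimately have "(\<lambda>n. complex_of_real x ^ (n+2) / of_nat ((n+2)*(n+1))) sums of_real (x + (1-x) * ln (1-x))"
    by simp
  thus ?thesis by (simp add: fM_h_def sums_iff)
qed

lemma Ln1_deriv:
  fixes z :: complex assumes "norm z < 1"
  shows "((\<lambda>z. ln (1 - z)) has_field_derivative (-1/(1-z))) (at z)"
proof -
  have "Re z \<le> norm z" by (rule complex_Re_le_cmod)
  hence "Re z < 1" using assms by simp
  hence "1 - z \<notin> \<real>\<^sub>\<le>\<^sub>0" by (auto simp: complex_nonpos_Reals_iff)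
  thus ?thesis by (auto intro!: derivative_eq_intros simp: field_simps)
qed

lemma Phi_deriv:
  fixes z :: complex assumes z: "norm z < 1"
  shows "((\<lambda>z. z + 2 * of_real M * (z + (1-z) * ln (1-z))) has_field_derivative (1 - 2 * of_real M * ln (1-z))) (at z)"
proof -
  have z1: "1 - z \<noteq> 0" using z by auto
  have da: "((\<lambda>z. 1 - z) has_field_derivative (-1)) (at z)" by (auto intro!: derivative_eq_intros)
  have A: "((\<lambda>z. z + 2 * of_real M * (z + (1-z) * ln (1-z))) has_field_derivative
      (1 + 2 * of_real M * (1 + ((-1) * ln (1-z) + (1-z) * (-1/(1-z)))))) (at z)"
    using DERIV_add[OF DERIV_ident DERIV_cmult[OF DERIV_add[OF DERIV_ident DERIV_mult[OF da Ln1_deriv[OF z]]], of "2 * of_real M"]]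
    by simp
  have B: "1 + 2 * of_real M * (1 + ((-1) * ln (1-z) + (1-z) * (-1/(1-z)))) = 1 - 2 * of_real M * ln (1-z)"
    using z1 by (simp add: field_simps)
  show ?thesis by (rule DERIV_cong[OF A B])
qed

lemma fM_deriv1:
  fixes z :: complex assumes z: "norm z < 1"
  shows "(fM_h M has_field_derivative (1 - 2 * of_real M * ln (1-z))) (at z)"
  by (rule has_field_derivative_transform_within_open[OF Phi_deriv[OF z], of "ball 0 1"])
     (use z in \<open>auto simp: fM_closed\<close>)

lemma fM_hol: "fM_h M holomorphic_on ball 0 1"
  by (auto simp: holomorphic_on_open intro!: exI fM_deriv1)

lemma fM_deriv_eq: "norm z < 1 \<Longrightarrow> deriv (fM_h M) z = 1 - 2 * of_real M * ln (1-z)"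
  using fM_deriv1 DERIV_imp_deriv by blast

lemma fM_deriv2:
  fixes z :: complex assumes z: "norm z < 1"
  shows "(deriv ^^ 2) (fM_h M) z = 2 * of_real M / (1 - z)"
proof -
  have "((\<lambda>z. 1 - 2 * of_real M * ln (1-z)) has_field_derivative (0 - 2 * of_real M * (-1/(1-z)))) (at z)"
    by (intro DERIV_diff DERIV_const DERIV_cmult Ln1_deriv z)
  hence "(deriv (fM_h M) has_field_derivative (0 - 2 * of_real M * (-1/(1-z)))) (at z)"
    by (rule has_field_derivative_transform_within_open[of _ _ _ "ball 0 1"])
       (use z in \<open>auto simp: fM_deriv_eq\<close>)
  hence "deriv (deriv (fM_h M)) z = 0 - 2 * of_real M * (-1/(1-z))" by (rule DERIV_imp_deriv)
  thus ?thesis by (simp add: numeral_2_eq_2)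
qed

lemma PH0_fM:
  assumes M: "M > 0"
  shows "PH0 M (fM_h M) (\<lambda>_. 0)"
  unfolding PH0_def
proof (intro conjI ballI)
  show "fM_h M holomorphic_on ball 0 1" by (rule fM_hol)
  show "(\<lambda>_. 0) holomorphic_on ball 0 1" by simp
  show "fM_h M 0 = 0" using fM_closed[of 0 M] by simp
  show "deriv (fM_h M) 0 = 1" using fM_deriv_eq[of 0 M] by simp
  show "(\<lambda>_. 0::complex) 0 = 0" by simp
  show "deriv (\<lambda>_. 0::complex) 0 = 0" by simp
  fix z :: complex assume z: "z \<in> ball 0 1"
  hence nz: "norm z < 1" by simp
  have "z * (deriv ^^ 2) (fM_h M) z = complex_of_real (2*M) * (z / (1 - z))"
    using fM_deriv2[OF nz] by (simp add: field_simps)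
  hence "Re (z * (deriv ^^ 2) (fM_h M) z) = Re (complex_of_real (2*M) * (z / (1 - z)))" by simp
  also have "\<dots> = 2*M * Re (z / (1 - z))" by (rule Re_ofreal_mult)
  finally have e: "Re (z * (deriv ^^ 2) (fM_h M) z) = 2*M * Re (z / (1 - z))" .
  have "Re (z / (1 - z)) \<ge> - norm z / (1 + norm z)" by (rule re_frac_bound[OF nz])
  moreover have "norm z / (1 + norm z) < 1/2"
  proof -
    have p: "0 < 1 + norm z" by (simp add: add_pos_nonneg)
    have "norm z < (1/2) * (1 + norm z)" using nz by simp
    thus ?thesis using p by (simp add: divide_less_eq)
  qed
  ultimately have "Re (z / (1 - z)) > -1/2" by linarith
  hence "(2*M) * (-1/2) < (2*M) * Re (z / (1 - z))" using M by (intro mult_strict_left_mono) auto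
  hence "2*M * Re (z / (1 - z)) > 2*M*(-1/2)" by simp
  thus "Re (z * (deriv ^^ 2) (fM_h M) z) > - M + cmod (z * (deriv ^^ 2) (\<lambda>_. 0) z)"
    using e by simp
qed

definition cM :: "real \<Rightarrow> nat \<Rightarrow> complex" where
  "cM M n = (if n = 0 then 0 else if n = 1 then 1 else 2 * of_real M / of_nat (n * (n - 1)))"

lemma cM_sums:
  assumes "norm z < 1"
  shows "(\<lambda>n. cM M n * z ^ n) sums fM_h M z"
proof -
  have "(\<lambda>m. 2 * of_real M * (z ^ (m+2) / of_nat ((m+2)*(m+1)))) sums (2 * of_real M * (z + (1-z) * ln (1-z)))"
    by (rule sums_mult[OF S_sums_complex[OF assms]])
  moreover have "cM M (Suc (Suc m)) * z ^ (Suc (Suc m)) = 2 * of_real M * (z ^ (m+2) / of_nat ((m+2)*(m+1)))" for m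
    by (simp add: cM_def)
  ultimately have "(\<lambda>m. cM M (Suc (Suc m)) * z ^ (Suc (Suc m))) sums (2 * of_real M * (z + (1-z) * ln (1-z)))"
    by simp
  hence "(\<lambda>m. cM M (Suc m) * z ^ (Suc m)) sums (2 * of_real M * (z + (1-z) * ln (1-z)) + cM M 1 * z^1)"
    by (subst (asm) sums_Suc_iff[where f="\<lambda>m. cM M (Suc m) * z ^ (Suc m)"]) simp
  hence "(\<lambda>m. cM M m * z ^ m) sums (2 * of_real M * (z + (1-z) * ln (1-z)) + cM M 1 * z^1 + cM M 0 * z^0)"
    by (subst (asm) sums_Suc_iff[where f="\<lambda>m. cM M m * z ^ m"]) simp
  thus ?thesis using fM_closed[OF assms, of M] by (simp add: cM_def add_ac)
qed

lemma fM_fps: "fM_h M has_fps_expansion Abs_fps (cM M)"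
  unfolding has_fps_expansion_def
proof
  have "summable (\<lambda>n. cM M n * (1/2) ^ n)" using cM_sums[of "1/2" M] by (simp add: sums_iff)
  hence "conv_radius (cM M) \<ge> norm (1/2 :: complex)" by (rule conv_radius_geI)
  thus "0 < fps_conv_radius (Abs_fps (cM M))"
    unfolding fps_conv_radius_def by (auto intro: less_le_trans[of _ "ereal (1/2)"])
  have "eventually (\<lambda>z. z \<in> ball (0::complex) 1) (nhds 0)" by (intro eventually_nhds_in_open) auto
  thus "eventually (\<lambda>z. eval_fps (Abs_fps (cM M)) z = fM_h M z) (nhds 0)"
  proof (rule eventually_mono)
    fix x :: complex assume "x \<in> ball 0 1"
    hence "norm x < 1" by simp
    thus "eval_fps (Abs_fps (cM M)) x = fM_h M x"
      using sums_unique[OF cM_sums[of x M]] by (simp add: eval_fps_def)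
  qed
qed

lemma tcoeff_fM:
  assumes "n \<ge> 2"
  shows "tcoeff (fM_h M) n = 2 * of_real M / of_nat (n * (n - 1))"
proof -
  have "fps_nth (Abs_fps (cM M)) n = (deriv ^^ n) (fM_h M) 0 / fact n"
    by (rule fps_nth_fps_expansion[OF fM_fps])
  thus ?thesis using assms by (simp add: tcoeff_def cM_def)
qed





lemma re_lower_schwarz:
  fixes q :: "complex \<Rightarrow> complex" and M :: real
  assumes hol: "q holomorphic_on ball 0 1" and q0: "q 0 = 0"
    and re: "\<And>z. z \<in> ball 0 1 \<Longrightarrow> Re (q z) > -M" and M: "M > 0"
    and w: "w \<in> ball 0 1"
  shows "Re (q w) \<ge> -2*M*norm w/(1+norm w)"
proof -
  define \<phi> where "\<phi> = (\<lambda>z. q z / (q z + 2*M))"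
  have nz: "q z + 2*M \<noteq> 0" if "z \<in> ball 0 1" for z
  proof -
    have "Re (q z + 2*M) > 0" using re[OF that] M by simp
    thus ?thesis by (metis order_less_irrefl zero_complex.sel(1))
  qed
  have hphi: "\<phi> holomorphic_on ball 0 1"
    unfolding \<phi>_def using hol nz by (intro holomorphic_intros) auto
  have lt1: "norm (\<phi> z) < 1" if "norm z < 1" for z
  proof -
    have z: "z \<in> ball 0 1" using that by simp
    have e1: "(norm(q z + 2*M))^2 = (Re (q z) + 2*M)^2 + (Im (q z))^2" by (simp add: cmod_power2)
    have e2: "(norm (q z))^2 = (Re (q z))^2 + (Im (q z))^2" by (simp add: cmod_power2)
    have e3: "(Re(q z) + 2*M)^2 - (Re (q z))^2 = 4*M*(Re (q z) + M)" by (simp add: power2_eq_square algebra_simps)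
    have "4*M*(Re (q z) + M) > 0" using re[OF z] M by simp
    hence "(norm (q z))^2 < (norm (q z + 2*M))^2" using e1 e2 e3 by linarith
    hence "norm (q z) < norm (q z + 2*M)" by (simp add: power_less_imp_less_base)
    thus ?thesis unfolding \<phi>_def using nz[OF z] by (simp add: norm_divide divide_less_eq)
  qed
  have phi0: "\<phi> 0 = 0" by (simp add: \<phi>_def q0)
  have nw: "norm w < 1" using w by simp
  have sch: "norm (\<phi> w) \<le> norm w"
    using Schwarz_Lemma(1)[OF hphi phi0 lt1 nw] by simp
  have p1: "\<phi> w \<noteq> 1" using lt1[OF nw] by auto
  have qeq: "q w = 2*M * (\<phi> w / (1 - \<phi> w))"
  proof -
    have "\<phi> w * (q w + 2*M) = q w" unfolding \<phi>_def using nz[OF w] by simp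
    hence "q w * (1 - \<phi> w) = 2*M*\<phi> w" by (simp add: algebra_simps)
    thus ?thesis using p1 by (simp add: field_simps)
  qed
  have "Re (q w) = Re (complex_of_real (2*M) * (\<phi> w / (1 - \<phi> w)))" using qeq by simp
  also have "\<dots> = 2*M * Re (\<phi> w / (1 - \<phi> w))" by (rule Re_ofreal_mult)
  also have "\<dots> \<ge> 2*M * (- norm (\<phi> w) / (1 + norm (\<phi> w)))"
    using re_frac_bound[OF lt1[OF nw]] M by (intro mult_left_mono) auto
  finally have A: "Re (q w) \<ge> 2*M * (- norm (\<phi> w) / (1 + norm (\<phi> w)))" .
  have "norm (\<phi> w) / (1 + norm (\<phi> w)) \<le> norm w / (1 + norm w)"
    using frac_mono[OF norm_ge_zero sch] .
  hence "2*M * (norm (\<phi> w) / (1 + norm (\<phi> w))) \<le> 2*M*(norm w/(1+norm w))"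
    using M by (intro mult_left_mono) auto
  moreover have "-2*M*norm w/(1+norm w) = -(2*M*(norm w/(1+norm w)))" by simp
  moreover have "2*M * (- norm (\<phi> w) / (1 + norm (\<phi> w))) = -(2*M * (norm (\<phi> w) / (1 + norm (\<phi> w))))" by simp
  ultimately have "2*M * (- norm (\<phi> w) / (1 + norm (\<phi> w))) \<ge> -2*M*norm w/(1+norm w)"
    by linarith
  thus ?thesis using A by linarith
qed

lemma re_deriv_lower:
  fixes F :: "complex \<Rightarrow> complex" and M :: real
  assumes holF: "F holomorphic_on ball 0 1" and d0: "deriv F 0 = 1"
    and re: "\<And>z. z \<in> ball 0 1 \<Longrightarrow> Re (z * (deriv ^^ 2) F z) > -M" and M: "M > 0"
    and w: "w \<in> ball 0 1"
  shows "Re (deriv F w) \<ge> 1 - 2*M*ln(1+norm w)"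
proof -
  define q where "q = (\<lambda>z. z * (deriv ^^ 2) F z)"
  have hq: "q holomorphic_on ball 0 1" unfolding q_def
    by (intro holomorphic_intros holomorphic_higher_deriv[OF holF]) auto
  have qre: "\<And>z. z \<in> ball 0 1 \<Longrightarrow> Re (q z) > -M" unfolding q_def using re by blast
  have q0: "q 0 = 0" by (simp add: q_def)
  have qlow: "Re (q u) \<ge> -2*M*norm u/(1+norm u)" if "u \<in> ball 0 1" for u
    by (rule re_lower_schwarz[OF hq q0 qre M that])
  have nw: "norm w < 1" using w by simp
  have inb: "of_real t * w \<in> ball 0 1" if "t \<in> {0..1}" for t
  proof -
    have "norm (of_real t * w) = \<bar>t\<bar> * norm w" by (simp add: norm_mult)
    also have "\<dots> \<le> norm w" using that by (auto intro: mult_left_le_one_le)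
    finally show ?thesis using nw by simp
  qed
  define \<Psi> where "\<Psi> = (\<lambda>t. Re (deriv F (of_real t * w)) + 2*M*ln(1 + t*norm w))"
  have D: "(\<Psi> has_real_derivative (Re (w * (deriv ^^ 2) F (of_real t * w)) + 2*M*(norm w/(1+t*norm w)))) (at t)"
    if t: "t \<in> {0..1}" for t
  proof -
    have d1: "((deriv ^^ 1) F has_field_derivative (deriv ^^ (Suc 1)) F (of_real t * w)) (at (of_real t * w))"
      by (rule has_field_derivative_higher_deriv[OF holF]) (use inb[OF t] in auto)
    have d2: "((\<lambda>t. of_real t * w) has_vector_derivative w) (at t)"
      by (auto intro!: derivative_eq_intros)
    have "((deriv F \<circ> (\<lambda>t. of_real t * w)) has_vector_derivative (w * (deriv ^^ 2) F (of_real t * w))) (at t)"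
      using field_vector_diff_chain_at[OF d2] d1 by (simp add: numeral_2_eq_2)
    hence d3: "((\<lambda>t. Re (deriv F (of_real t * w))) has_real_derivative Re (w * (deriv ^^ 2) F (of_real t * w))) (at t)"
      by (intro has_field_derivative_Re) (simp add: o_def)
    have pos: "1 + t*norm w > 0" using t by (simp add: add_pos_nonneg)
    have d4: "((\<lambda>t. ln(1 + t*norm w)) has_real_derivative (norm w/(1+t*norm w))) (at t)"
      using pos by (auto intro!: derivative_eq_intros simp: field_simps)
    show ?thesis unfolding \<Psi>_def
      using DERIV_add[OF d3 DERIV_cmult[OF d4, of "2*M"]] by simp
  qed
  have cont: "continuous_on {0..1} \<Psi>"
    by (intro continuous_at_imp_continuous_on ballI DERIV_isCont[OF D]) auto
  have "\<Psi> 0 \<le> \<Psi> 1"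
  proof (rule DERIV_nonneg_imp_increasing_open[OF _ _ cont])
    fix t :: real assume t: "0 < t" "t < 1"
    have tt: "t \<in> {0..1}" using t by auto
    have pos: "1 + t*norm w > 0" using t by (simp add: add_pos_nonneg)
    have "Re (q (of_real t * w)) \<ge> -2*M*norm (of_real t * w)/(1+norm (of_real t * w))"
      using qlow[OF inb[OF tt]] .
    moreover have "norm (of_real t * w) = t * norm w" using t by (simp add: norm_mult)
    moreover have "Re (q (of_real t * w)) = t * Re (w * (deriv ^^ 2) F (of_real t * w))"
      by (simp add: q_def mult.assoc)
    ultimately have "t * Re (w * (deriv ^^ 2) F (of_real t * w)) \<ge> t * (-2*M*norm w/(1+t*norm w))"
      using t by (simp add: field_simps)
    hence "Re (w * (deriv ^^ 2) F (of_real t * w)) \<ge> -2*M*norm w/(1+t*norm w)"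
      by (rule mult_left_le_imp_le) (use t in simp)
    hence "Re (w * (deriv ^^ 2) F (of_real t * w)) + 2*M*(norm w/(1+t*norm w)) \<ge> 0"
      by (simp add: field_simps)
    thus "\<exists>y. (\<Psi> has_real_derivative y) (at t) \<and> 0 \<le> y" using D[OF tt] by blast
  qed simp
  thus ?thesis unfolding \<Psi>_def using d0 by simp
qed

lemma growth_lower:
  fixes F :: "complex \<Rightarrow> complex" and M :: real
  assumes holF: "F holomorphic_on ball 0 1" and F0: "F 0 = 0" and d0: "deriv F 0 = 1"
    and re: "\<And>z. z \<in> ball 0 1 \<Longrightarrow> Re (z * (deriv ^^ 2) F z) > -M" and M: "M > 0"
    and z: "z \<in> ball 0 1"
  shows "Re (cnj z * F z) \<ge> norm z * (norm z + 2*M*(norm z - (1+norm z)*ln(1+norm z)))"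
proof -
  define r where "r = norm z"
  have r0: "r \<ge> 0" by (simp add: r_def)
  have nz: "norm z < 1" using z by simp
  have inb: "of_real t * z \<in> ball 0 1" if "t \<in> {0..1}" for t
  proof -
    have "norm (of_real t * z) = \<bar>t\<bar> * norm z" by (simp add: norm_mult)
    also have "\<dots> \<le> norm z" using that by (auto intro: mult_left_le_one_le)
    finally show ?thesis using nz by simp
  qed
  have zz: "cnj z * z = of_real (r^2)" unfolding r_def by (metis complex_norm_square mult.commute)
  define \<Phi> where "\<Phi> = (\<lambda>t. Re (cnj z * F (of_real t * z)) - r^2 * t + 2*M*r*((1+t*r)*ln(1+t*r) - t*r))"
  have D: "(\<Phi> has_real_derivative (r^2 * Re (deriv F (of_real t * z)) - r^2 + 2*M*r^2*ln(1+t*r))) (at t)"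
    if t: "t \<in> {0..1}" for t
  proof -
    have d1: "((\<lambda>u. cnj z * F u) has_field_derivative (cnj z * deriv F (of_real t * z))) (at (of_real t * z))"
      using holomorphic_derivI[OF holF _ inb[OF t]] by (intro DERIV_cmult) auto
    have d2: "((\<lambda>t. of_real t * z) has_vector_derivative z) (at t)"
      by (auto intro!: derivative_eq_intros)
    have "(((\<lambda>u. cnj z * F u) \<circ> (\<lambda>t. of_real t * z)) has_vector_derivative (z * (cnj z * deriv F (of_real t * z)))) (at t)"
      using field_vector_diff_chain_at[OF d2 d1] .
    hence d3: "((\<lambda>t. Re (cnj z * F (of_real t * z))) has_real_derivative Re (z * (cnj z * deriv F (of_real t * z)))) (at t)"
      by (intro has_field_derivative_Re) (simp add: o_def)
    have "z * (cnj z * deriv F (of_real t * z)) = of_real (r^2) * deriv F (of_real t * z)"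
      using zz by (simp add: mult.assoc[symmetric] mult.commute[of z])
    hence e: "Re (z * (cnj z * deriv F (of_real t * z))) = r^2 * Re (deriv F (of_real t * z))"
      by (simp only: Re_ofreal_mult)
    have pos: "1 + t*r > 0" using t r0 by (simp add: add_pos_nonneg)
    have da: "((\<lambda>t. 1+t*r) has_real_derivative r) (at t)"
      by (auto intro!: derivative_eq_intros)
    have db: "((\<lambda>t. ln(1+t*r)) has_real_derivative (r/(1+t*r))) (at t)"
      using pos by (auto intro!: derivative_eq_intros simp: field_simps)
    have dc: "((\<lambda>t. t*r) has_real_derivative r) (at t)"
      by (auto intro!: derivative_eq_intros)
    have "((\<lambda>t. (1+t*r)*ln(1+t*r) - t*r) has_real_derivative (r * ln(1+t*r) + (1+t*r)*(r/(1+t*r)) - r)) (at t)"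
      using DERIV_diff[OF DERIV_mult[OF da db] dc] by simp
    moreover have "r * ln(1+t*r) + (1+t*r)*(r/(1+t*r)) - r = r*ln(1+t*r)" using pos by simp
    ultimately have d4: "((\<lambda>t. (1+t*r)*ln(1+t*r) - t*r) has_real_derivative (r*ln(1+t*r))) (at t)"
      by simp
    have d5: "((\<lambda>t. r^2*t) has_real_derivative r^2) (at t)"
      by (auto intro!: derivative_eq_intros)
    have "(\<Phi> has_real_derivative (r^2 * Re (deriv F (of_real t * z)) - r^2 + 2*M*r*(r*ln(1+t*r)))) (at t)"
      unfolding \<Phi>_def using DERIV_add[OF DERIV_diff[OF d3 d5] DERIV_cmult[OF d4, of "2*M*r"]] e by simp
    thus ?thesis by (simp add: power2_eq_square mult.assoc)
  qed
  have cont: "continuous_on {0..1} \<Phi>"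
    by (intro continuous_at_imp_continuous_on ballI DERIV_isCont[OF D]) auto
  have "\<Phi> 0 \<le> \<Phi> 1"
  proof (rule DERIV_nonneg_imp_increasing_open[OF _ _ cont])
    fix t :: real assume t: "0 < t" "t < 1"
    have tt: "t \<in> {0..1}" using t by auto
    have "Re (deriv F (of_real t * z)) \<ge> 1 - 2*M*ln(1+norm (of_real t * z))"
      by (rule re_deriv_lower[OF holF d0 re M inb[OF tt]])
    moreover have "norm (of_real t * z) = t * r" using t by (simp add: norm_mult r_def)
    ultimately have "Re (deriv F (of_real t * z)) - 1 + 2*M*ln(1+t*r) \<ge> 0" by simp
    hence "r^2 * (Re (deriv F (of_real t * z)) - 1 + 2*M*ln(1+t*r)) \<ge> 0" by simp
    hence "r^2 * Re (deriv F (of_real t * z)) - r^2 + 2*M*r^2*ln(1+t*r) \<ge> 0"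
      by (simp add: algebra_simps)
    thus "\<exists>y. (\<Phi> has_real_derivative y) (at t) \<and> 0 \<le> y" using D[OF tt] by blast
  qed simp
  hence "0 \<le> Re (cnj z * F z) - r^2 + 2*M*r*((1+r)*ln(1+r) - r)"
    unfolding \<Phi>_def using F0 by simp
  thus ?thesis unfolding r_def[symmetric] by (simp add: algebra_simps power2_eq_square)
qed




lemma circlepath0_cis: "circlepath 0 r t = of_real r * cis (2*pi*t)"
  by (simp add: circlepath_def part_circlepath_def linepath_def cis_conv_exp mult_ac)

lemma vd_circlepath0: "vector_derivative (circlepath 0 r) (at t) = 2*pi*\<i>  * of_real r * cis (2*pi*t)"
  by (simp add: vector_derivative_circlepath cis_conv_exp mult_ac)

lemma circ_int:
  assumes "(f has_contour_integral I) (circlepath 0 r)"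
  shows "((\<lambda>t. f (of_real r * cis (2*pi*t)) * (2*pi*\<i>  * of_real r * cis (2*pi*t))) has_integral I) {0..1}"
  using assms unfolding has_contour_integral circlepath0_cis vd_circlepath0 .

lemma has_integral_eq_rule:
  "(f has_integral I) S \<Longrightarrow> (\<And>x. x \<in> S \<Longrightarrow> f x = g x) \<Longrightarrow> I = J \<Longrightarrow> (g has_integral J) S"
  using has_integral_cong by blast

lemma alg_a: fixes x \<rho> Q C :: complex assumes "x \<noteq> 0" "\<rho> \<noteq> 0"
  shows "Q / (\<rho>*x - 0)^Suc k * (C*\<rho>*x) = (C/\<rho>^k) * (Q * inverse x^k)"
  using assms by (simp add: field_simps power_mult_distrib)

lemma alg_b: fixes x \<rho> Q C :: complex assumes "x \<noteq> 0" "\<rho> \<noteq> 0"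
  shows "Q * (\<rho>*x)^k / (\<rho>*x - 0)^Suc 0 * (C*\<rho>*x) = (C*\<rho>^k) * (Q * x^k)"
  using assms by (simp add: field_simps power_mult_distrib)

lemma alg_c: fixes x \<rho> Q C :: complex assumes "x \<noteq> 0" "\<rho> \<noteq> 0"
  shows "Q / (\<rho>*x - 0)^Suc 0 * (C*\<rho>*x) = C * Q"
  using assms by (simp add: field_simps)

lemma alg_d: fixes x \<rho> C :: complex assumes "x \<noteq> 0" "\<rho> \<noteq> 0"
  shows "1 / (\<rho>*x - 0)^Suc k * (C*\<rho>*x) = (C/\<rho>^k) * inverse x^k"
  using assms by (simp add: field_simps power_mult_distrib)

lemma Re_cnj_helper: "Re (a * (w + cnj w)) = Re a * (2 * Re w)"
  by simp

lemma coeff_bound: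
  fixes q :: "complex \<Rightarrow> complex" and M :: real
  assumes hq: "q holomorphic_on ball 0 1" and q0: "q 0 = 0"
    and re: "\<And>z. z \<in> ball 0 1 \<Longrightarrow> Re (q z) > -M" and M: "M > 0" and k: "k \<ge> 1"
  shows "norm ((deriv ^^ k) q 0 / fact k) \<le> 2*M"
proof -
  define c where "c = (deriv ^^ k) q 0 / fact k"
  have main: "norm c * r^k \<le> 2*M" if r: "0 < r" "r < 1" for r
  proof -
    define E where "E = (\<lambda>t::real. cis (2*pi*t))"
    define \<gamma> where "\<gamma> = (\<lambda>t. of_real r * E t)"
    have sub: "cball 0 r \<subseteq> ball (0::complex) 1" using r by auto
    have hq': "q holomorphic_on ball 0 r" using hq sub by (meson ball_subset_cball holomorphic_on_subset subset_trans)
    have cq: "continuous_on (cball 0 r) q" using hq sub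
      by (meson holomorphic_on_imp_continuous_on holomorphic_on_subset)
    have z0: "(0::complex) \<in> ball 0 r" using r by simp
    have En: "E t \<noteq> 0" "cnj (E t) = inverse (E t)" "norm (E t) = 1" for t
      by (auto simp: E_def cis_cnj)
    have rnz: "complex_of_real r \<noteq> 0" using r by simp
    have ing: "\<gamma> t \<in> ball 0 1" for t using r by (simp add: \<gamma>_def norm_mult En)
    define C where "C = 2*pi*\<i>"
    have Cnz: "C \<noteq> 0" by (simp add: C_def)
    have rk: "complex_of_real r ^ k \<noteq> 0" using rnz by simp
    have "((\<lambda>u. q u / (u - 0) ^ Suc k) has_contour_integral ((2 * pi * \<i>) / (fact k) * (deriv ^^ k) q 0)) (circlepath 0 r)"
      by (rule Cauchy_has_contour_integral_higher_derivative_circlepath[OF cq hq' z0])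
    from circ_int[OF this, folded C_def]
    have "((\<lambda>t. (C / of_real r^k) * (q (\<gamma> t) * inverse (E t)^k)) has_integral (C*c)) {0..1}"
      apply (rule has_integral_eq_rule)
      subgoal unfolding \<gamma>_def E_def by (rule alg_a) (use rnz in auto)
      subgoal by (simp add: c_def)
      done
    moreover have nzA: "C / of_real r^k \<noteq> 0" using Cnz rk by simp
    ultimately have "((\<lambda>t. q (\<gamma> t) * inverse (E t)^k) has_integral (C*c) / (C / of_real r^k)) {0..1}"
      by (subst (asm) has_integral_mult_right_iff[OF nzA])
    moreover have "(C*c) / (C / of_real r^k) = c * of_real r^k" using Cnz rk by (simp add: field_simps)
    ultimately have a2: "((\<lambda>t. q (\<gamma> t) * inverse (E t)^k) has_integral (c * of_real r^k)) {0..1}"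
      by simp
    have hqk: "(\<lambda>u. q u * u^k) holomorphic_on ball 0 r" using hq' by (intro holomorphic_intros)
    have cqk: "continuous_on (cball 0 r) (\<lambda>u. q u * u^k)" using cq by (intro continuous_intros)
    have "((\<lambda>u. q u * u^k / (u - 0) ^ Suc 0) has_contour_integral ((2 * pi * \<i>) / (fact 0) * (deriv ^^ 0) (\<lambda>u. q u * u^k) 0)) (circlepath 0 r)"
      by (rule Cauchy_has_contour_integral_higher_derivative_circlepath[OF cqk hqk z0])
    from circ_int[OF this, folded C_def]
    have "((\<lambda>t. (C * of_real r^k) * (q (\<gamma> t) * E t^k)) has_integral 0) {0..1}"
      apply (rule has_integral_eq_rule)
      subgoal unfolding \<gamma>_def E_def by (rule alg_b) (use rnz in auto)
      subgoal using q0 by simp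
      done
    hence b2: "((\<lambda>t. q (\<gamma> t) * E t^k) has_integral 0) {0..1}"
      using Cnz rk by (simp add: has_integral_mult_right_iff)
    have "((\<lambda>u. q u / (u - 0) ^ Suc 0) has_contour_integral ((2 * pi * \<i>) / (fact 0) * (deriv ^^ 0) q 0)) (circlepath 0 r)"
      by (rule Cauchy_has_contour_integral_higher_derivative_circlepath[OF cq hq' z0])
    from circ_int[OF this, folded C_def]
    have "((\<lambda>t. C * q (\<gamma> t)) has_integral 0) {0..1}"
      apply (rule has_integral_eq_rule)
      subgoal unfolding \<gamma>_def E_def by (rule alg_c) (use rnz in auto)
      subgoal using q0 by simp
      done
    hence c2: "((\<lambda>t. q (\<gamma> t)) has_integral 0) {0..1}"
      using Cnz by (simp add: has_integral_mult_right_iff)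
    have "((\<lambda>u. 1 / (u - 0) ^ Suc k) has_contour_integral ((2 * pi * \<i>) / (fact k) * (deriv ^^ k) (\<lambda>u. 1) 0)) (circlepath 0 r)"
      by (rule Cauchy_has_contour_integral_higher_derivative_circlepath) (use z0 in \<open>auto intro: continuous_intros holomorphic_intros\<close>)
    from circ_int[OF this, folded C_def]
    have "((\<lambda>t. (C / of_real r^k) * inverse (E t)^k) has_integral 0) {0..1}"
      apply (rule has_integral_eq_rule)
      subgoal unfolding \<gamma>_def E_def by (rule alg_d) (use rnz in auto)
      subgoal using k by simp
      done
    hence d2: "((\<lambda>t. inverse (E t)^k) has_integral 0) {0..1}"
      by (subst (asm) has_integral_mult_right_iff[OF nzA]) simp
    obtain \<sigma> where sn: "norm \<sigma> = 1" and sc: "\<sigma> * c = of_real (norm c)"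
    proof (cases "c = 0")
      case True thus ?thesis using that[of 1] by simp
    next
      case False
      show ?thesis
      proof (rule that[of "cnj c / of_real (norm c)"])
        show "norm (cnj c / of_real (norm c)) = 1" using False by (simp add: norm_divide)
        have "cnj c * c = of_real (norm c ^ 2)" by (metis complex_norm_square mult.commute)
        thus "cnj c / of_real (norm c) * c = of_real (norm c)" using False
          by (simp add: field_simps power2_eq_square)
      qed
    qed
    define w where "w = (\<lambda>t. \<sigma> * inverse (E t)^k)"
    have wn: "norm (w t) = 1" for t by (simp add: w_def norm_mult sn norm_power En norm_inverse)
    have cw: "cnj (w t) = cnj \<sigma> * E t^k" for t by (simp add: w_def E_def cis_cnj)
    from has_integral_add[OF has_integral_mult_right[OF a2, of \<sigma>] has_integral_mult_right[OF b2, of "cnj \<sigma>"]]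
    have "((\<lambda>t. q (\<gamma> t) * (w t + cnj (w t))) has_integral (of_real (norm c * r^k))) {0..1}"
      apply (rule has_integral_eq_rule)
      subgoal for t unfolding cw by (simp add: w_def algebra_simps)
      subgoal using sc by (simp add: mult.assoc[symmetric])
      done
    from has_integral_Re[OF this]
    have A: "((\<lambda>t. Re (q (\<gamma> t)) * (2 * Re (w t))) has_integral (norm c * r^k)) {0..1}"
      by (simp add: Re_cnj_helper)
    from has_integral_Re[OF has_integral_mult_right[OF d2, of \<sigma>]]
    have B: "((\<lambda>t. Re (w t)) has_integral 0) {0..1}" by (simp add: w_def)
    have C: "((\<lambda>t. Re (q (\<gamma> t))) has_integral 0) {0..1}" using has_integral_Re[OF c2] by simp
    have G: "((\<lambda>t. Re (q (\<gamma> t)) * (2 * Re (w t)) + 2*M * Re (w t)) has_integral (norm c * r^k)) {0..1}"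
      using has_integral_add[OF A has_integral_mult_right[OF B, of "2*M"]] by simp
    have H: "((\<lambda>t. 2 * Re (q (\<gamma> t)) + 2*M) has_integral (2*M)) {0..1}"
      using has_integral_add[OF has_integral_mult_right[OF C, of 2] has_integral_const_real[of "2*M" 0 1]] by simp
    have le: "Re (q (\<gamma> t)) * (2 * Re (w t)) + 2*M * Re (w t) \<le> 2 * Re (q (\<gamma> t)) + 2*M" for t
    proof -
      have p: "Re (q (\<gamma> t)) + M > 0" using re[OF ing[of t]] by simp
      have "Re (w t) \<le> 1" using complex_Re_le_cmod[of "w t"] wn[of t] by simp
      hence "(Re (q (\<gamma> t)) + M) * Re (w t) \<le> (Re (q (\<gamma> t)) + M) * 1"
        using p by (intro mult_left_mono) auto
      thus ?thesis by (simp add: algebra_simps)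
    qed
    show ?thesis using has_integral_le[OF G H] le by blast
  qed
  have "norm c \<le> 2*M"
  proof (rule field_le_mult_one_interval)
    fix z :: real assume z: "0 < z" "z < 1"
    define r where "r = root k z"
    have "0 < r" "r < 1" using z k by (auto simp: r_def)
    moreover have "r^k = z" using z k by (simp add: r_def)
    ultimately show "z * norm c \<le> 2*M" using main[of r] by (simp add: mult.commute)
  qed
  thus ?thesis by (simp add: c_def)
qed





lemma PH0_F:
  assumes P: "PH0 M h g" and e: "norm \<epsilon> = 1"
  shows "(\<lambda>z. h z + \<epsilon> * g z) holomorphic_on ball 0 1"
    and "\<And>n. (deriv ^^ n) (\<lambda>z. h z + \<epsilon> * g z) 0 = (deriv ^^ n) h 0 + \<epsilon> * (deriv ^^ n) g 0"
    and "(\<lambda>z. h z + \<epsilon> * g z) 0 = 0"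
    and "deriv (\<lambda>z. h z + \<epsilon> * g z) 0 = 1"
    and "\<And>z. z \<in> ball 0 1 \<Longrightarrow> Re (z * (deriv ^^ 2) (\<lambda>z. h z + \<epsilon> * g z) z) > -M"
proof -
  have hh: "h holomorphic_on ball 0 1" and hg: "g holomorphic_on ball 0 1"
    and h0: "h 0 = 0" and dh: "deriv h 0 = 1" and g0: "g 0 = 0" and dg: "deriv g 0 = 0"
    and re: "\<And>z. z \<in> ball 0 1 \<Longrightarrow> Re (z * (deriv ^^ 2) h z) > - M + cmod (z * (deriv ^^ 2) g z)"
    using P unfolding PH0_def by auto
  have heg: "(\<lambda>z. \<epsilon> * g z) holomorphic_on ball 0 1" using hg by (intro holomorphic_intros)
  show hol: "(\<lambda>z. h z + \<epsilon> * g z) holomorphic_on ball 0 1" using holomorphic_on_add[OF hh heg] .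
  have hd: "(deriv ^^ n) (\<lambda>z. h z + \<epsilon> * g z) z = (deriv ^^ n) h z + \<epsilon> * (deriv ^^ n) g z"
    if z: "z \<in> ball 0 1" for n z
    using higher_deriv_add[OF hh heg open_ball z, of n] higher_deriv_cmult[OF hg z open_ball, of n \<epsilon>] by simp
  show "\<And>n. (deriv ^^ n) (\<lambda>z. h z + \<epsilon> * g z) 0 = (deriv ^^ n) h 0 + \<epsilon> * (deriv ^^ n) g 0"
    using hd[of 0] by simp
  show "(\<lambda>z. h z + \<epsilon> * g z) 0 = 0" using h0 g0 by simp
  show "deriv (\<lambda>z. h z + \<epsilon> * g z) 0 = 1" using hd[of 0 1] dh dg by simp
  fix z :: complex assume z: "z \<in> ball 0 1"
  have "Re (z * (deriv ^^ 2) (\<lambda>z. h z + \<epsilon> * g z) z) = Re (z * (deriv ^^ 2) h z) + Re (\<epsilon> * (z * (deriv ^^ 2) g z))"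
    using hd[OF z, of 2] by (simp add: algebra_simps)
  moreover have "Re (\<epsilon> * (z * (deriv ^^ 2) g z)) \<ge> - cmod (z * (deriv ^^ 2) g z)"
  proof -
    have "- Re (\<epsilon> * (z * (deriv ^^ 2) g z)) \<le> cmod (\<epsilon> * (z * (deriv ^^ 2) g z))"
      using abs_Re_le_cmod[of "\<epsilon> * (z * (deriv ^^ 2) g z)"] by linarith
    thus ?thesis using e by (simp add: norm_mult)
  qed
  ultimately show "Re (z * (deriv ^^ 2) (\<lambda>z. h z + \<epsilon> * g z) z) > -M" using re[OF z] by linarith
qed

lemma gen_alg: fixes N fk K D :: complex
  shows "N \<noteq> 0 \<Longrightarrow> fk \<noteq> 0 \<Longrightarrow> K * D / fk = N * K * (D / (N * fk))"
  by (simp add: field_simps)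

lemma coeff_F:
  fixes F :: "complex \<Rightarrow> complex"
  assumes holF: "F holomorphic_on ball 0 1"
    and re: "\<And>z. z \<in> ball 0 1 \<Longrightarrow> Re (z * (deriv ^^ 2) F z) > -M" and M: "M > 0" and n: "n \<ge> 2"
  shows "norm (tcoeff F n) * (of_nat n * (of_nat n - 1)) \<le> 2*M"
proof -
  define k where "k = n - 1"
  have k: "k \<ge> 1" "n = Suc k" using n by (auto simp: k_def)
  define G where "G = (deriv ^^ 2) F"
  have hG: "G holomorphic_on ball 0 1" unfolding G_def by (rule holomorphic_higher_deriv[OF holF open_ball])
  define q where "q = (\<lambda>z. z * G z)"
  have hq: "q holomorphic_on ball 0 1" unfolding q_def using hG by (intro holomorphic_intros)
  have q0: "q 0 = 0" by (simp add: q_def)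
  have qre: "\<And>z. z \<in> ball 0 1 \<Longrightarrow> Re (q z) > -M" using re by (simp add: q_def G_def)
  have cb: "norm ((deriv ^^ k) q 0 / fact k) \<le> 2*M" by (rule coeff_bound[OF hq q0 qre M k(1)])
  have "(deriv ^^ k) q 0 = (\<Sum>i = 0..k. of_nat (k choose i) * (deriv ^^ i) (\<lambda>w. w) 0 * (deriv ^^ (k-i)) G 0)"
    unfolding q_def by (rule higher_deriv_mult[OF _ hG open_ball]) auto
  also have "\<dots> = (\<Sum>i = 0..k. if i = 1 then of_nat k * (deriv ^^ (k-1)) G 0 else 0)"
    by (rule sum.cong) auto
  also have "\<dots> = of_nat k * (deriv ^^ (k-1)) G 0" using k by simp
  also have "(deriv ^^ (k-1)) G = (deriv ^^ n) F"
  proof -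
    have e1: "(deriv ^^ (k-1+2)) F = (deriv ^^ (k-1)) G" unfolding G_def funpow_add by simp
    have e2: "k-1+2 = n" using k by simp
    show ?thesis unfolding e2[symmetric] by (rule e1[symmetric])
  qed
  finally have qk: "(deriv ^^ k) q 0 = of_nat k * (deriv ^^ n) F 0" .
  have Nnz: "(of_nat n :: complex) \<noteq> 0" using k(2) by (simp only: of_nat_eq_0_iff)
  have fn: "(of_nat (fact n) :: complex) = of_nat n * fact k" using k(2) by (simp add: algebra_simps)
  have "(deriv ^^ k) q 0 / fact k = of_nat n * of_nat k * tcoeff F n"
    unfolding qk tcoeff_def fn by (rule gen_alg[OF Nnz]) simp
  hence "norm ((deriv ^^ k) q 0 / fact k) = norm (tcoeff F n) * (of_nat n * of_nat k)"
    by (simp add: norm_mult)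
  moreover have "real k = of_nat n - 1" using k by simp
  ultimately show ?thesis using cb by simp
qed

lemma align_exists:
  fixes a b :: complex
  shows "\<exists>\<epsilon>. norm \<epsilon> = 1 \<and> norm (a + \<epsilon> * b) = norm a + norm b"
proof -
  define u where "u = (if a = 0 then 1 else a / of_real (norm a))"
  define v where "v = (if b = 0 then 1 else b / of_real (norm b))"
  have nu: "norm u = 1" and nv: "norm v = 1" by (auto simp: u_def v_def norm_divide)
  have au: "of_real (norm a) * u = a" and bv: "of_real (norm b) * v = b" by (auto simp: u_def v_def)
  have "v * cnj v = of_real ((cmod v)^2)" by (rule complex_norm_square[symmetric])
  hence vv: "cnj v * v = 1" using nv by (simp add: mult.commute)
  have "u * cnj v * b = u * cnj v * (of_real (norm b) * v)" by (simp only: bv)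
  also have "\<dots> = of_real (norm b) * u * (cnj v * v)" by (simp only: mult_ac)
  also have "\<dots> = of_real (norm b) * u" by (simp only: vv mult_1_right)
  finally have e1: "u * cnj v * b = of_real (norm b) * u" .
  have "a + u * cnj v * b = of_real (norm a) * u + of_real (norm b) * u" by (simp only: e1 au)
  also have "\<dots> = of_real (norm a + norm b) * u" by (simp add: algebra_simps)
  finally have "norm (a + u * cnj v * b) = norm (of_real (norm a + norm b) * u)" by simp
  also have "\<dots> = norm a + norm b" by (simp only: norm_mult nu mult_1_right norm_of_real) simp
  finally have "norm (a + u * cnj v * b) = norm a + norm b" .
  moreover have "norm (u * cnj v) = 1" using nu nv by (simp add: norm_mult)
  ultimately show ?thesis by blast
qed




lemma coef_sum_bound:
  assumes P: "PH0 M h g" and M: "M > 0" and n: "n \<ge> 2"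
  shows "norm (tcoeff h n) + norm (tcoeff g n) \<le> 2*M / (of_nat n * (of_nat n - 1))"
proof -
  obtain \<epsilon> where e: "norm \<epsilon> = 1" and ne: "norm (tcoeff h n + \<epsilon> * tcoeff g n) = norm (tcoeff h n) + norm (tcoeff g n)"
    using align_exists by blast
  define F where "F = (\<lambda>z. h z + \<epsilon> * g z)"
  have hF: "F holomorphic_on ball 0 1" unfolding F_def by (rule PH0_F(1)[OF P e])
  have reF: "\<And>z. z \<in> ball 0 1 \<Longrightarrow> Re (z * (deriv ^^ 2) F z) > -M" unfolding F_def by (rule PH0_F(5)[OF P e])
  have tc: "tcoeff F n = tcoeff h n + \<epsilon> * tcoeff g n"
    unfolding tcoeff_def F_def PH0_F(2)[OF P e] by (simp add: add_divide_distrib)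
  have "norm (tcoeff F n) * (of_nat n * (of_nat n - 1)) \<le> 2*M" by (rule coeff_F[OF hF reF M n])
  moreover have "of_nat n * (of_nat n - 1) > (0::real)" using n by simp
  ultimately show ?thesis using tc ne by (simp add: field_simps)
qed

lemma harm_lower:
  assumes P: "PH0 M h g" and M: "M > 0" and z: "z \<in> ball 0 1"
  shows "norm (harm h g z) \<ge> norm z + 2*M*(norm z - (1 + norm z) * ln (1 + norm z))"
proof (cases "z = 0")
  case True
  have "h 0 = 0" "g 0 = 0" using P by (auto simp: PH0_def)
  thus ?thesis using True by (simp add: harm_def)
next
  case False
  define \<epsilon> where "\<epsilon> = z / cnj z"
  have e: "norm \<epsilon> = 1" using False by (simp add: \<epsilon>_def norm_divide)
  define F where "F = (\<lambda>z. h z + \<epsilon> * g z)"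
  have hF: "F holomorphic_on ball 0 1" unfolding F_def by (rule PH0_F(1)[OF P e])
  have F0: "F 0 = 0" unfolding F_def by (rule PH0_F(3)[OF P e])
  have dF: "deriv F 0 = 1" unfolding F_def by (rule PH0_F(4)[OF P e])
  have reF: "\<And>z. z \<in> ball 0 1 \<Longrightarrow> Re (z * (deriv ^^ 2) F z) > -M" unfolding F_def by (rule PH0_F(5)[OF P e])
  have gl: "Re (cnj z * F z) \<ge> norm z * (norm z + 2*M*(norm z - (1+norm z)*ln(1+norm z)))"
    by (rule growth_lower[OF hF F0 dF reF M z])
  have cz: "cnj z \<noteq> 0" using False by simp
  have "cnj z * F z = cnj z * h z + z * g z" unfolding F_def \<epsilon>_def using cz by (simp add: field_simps)
  hence "Re (cnj z * F z) = Re (cnj z * harm h g z)"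
    by (simp add: harm_def algebra_simps)
  also have "\<dots> \<le> norm (cnj z * harm h g z)" by (rule complex_Re_le_cmod)
  also have "\<dots> = norm z * norm (harm h g z)" by (simp add: norm_mult)
  finally have "norm z * (norm z + 2*M*(norm z - (1+norm z)*ln(1+norm z))) \<le> norm z * norm (harm h g z)"
    using gl by linarith
  thus ?thesis using False by (simp add: mult_le_cancel_left_pos)
qed

lemma bdist_lower:
  assumes P: "PH0 M h g" and M: "M > 0"
  shows "ereal (1 + 2*M*(1 - 2 * ln 2)) \<le> bdist (harm h g)"
proof -
  define lf where "lf = (\<lambda>r::real. r + 2*M*(r - (1 + r) * ln (1 + r)))"
  have h0: "harm h g 0 = 0" using P by (auto simp: PH0_def harm_def)
  have l1: "lf 1 = 1 + 2*M*(1 - 2 * ln 2)" by (simp add: lf_def)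
  have lim: "((\<lambda>r. ereal (lf r)) \<longlongrightarrow> ereal (lf 1)) (at_left 1)"
    unfolding lf_def by (intro tendsto_intros) auto
  show ?thesis unfolding bdist_def l1[symmetric] le_Liminf_iff
  proof (intro allI impI)
    fix y assume y: "y < ereal (lf 1)"
    have ev1: "eventually (\<lambda>r. y < ereal (lf r)) (at_left 1)" by (rule order_tendstoD(1)[OF lim y])
    have ev2: "eventually (\<lambda>r::real. r \<in> {0<..<1}) (at_left 1)" by (rule eventually_at_left_real) simp
    have "eventually (\<lambda>r. y < ereal (lf r) \<and> r \<in> {0<..<1}) (at_left 1)" using ev1 ev2 by (rule eventually_conj)
    thus "eventually (\<lambda>z. y < ereal (cmod (harm h g z - harm h g 0))) (filtercomap norm (at_left 1))"
      unfolding eventually_filtercomap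
    proof (intro exI conjI allI impI)
      fix z :: complex assume zz: "y < ereal (lf (norm z)) \<and> norm z \<in> {0<..<1}"
      hence "z \<in> ball 0 1" by simp
      from harm_lower[OF P M this] have "lf (norm z) \<le> norm (harm h g z)" by (simp add: lf_def)
      hence "ereal (lf (norm z)) \<le> ereal (norm (harm h g z))" by simp
      hence "y < ereal (norm (harm h g z))" using zz order_less_le_trans by blast
      thus "y < ereal (cmod (harm h g z - harm h g 0))" using h0 by simp
    qed
  qed
qed

lemma tcoeff_series:
  assumes hol: "f holomorphic_on ball 0 1" and z: "norm z < 1"
  shows "(\<lambda>m. tcoeff f (m+2) * z ^ (m+2)) sums (f z - tcoeff f 0 - tcoeff f 1 * z)"
proof -
  have "(\<lambda>n. (deriv ^^ n) f 0 / fact n * (z - 0) ^ n) sums f z"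
    by (rule holomorphic_power_series[OF hol]) (use z in simp)
  hence s: "(\<lambda>n. tcoeff f n * z ^ n) sums f z" by (simp add: tcoeff_def)
  have "(\<lambda>n. tcoeff f (Suc n) * z ^ (Suc n)) sums (f z - tcoeff f 0 * z^0)"
    using s by (subst sums_Suc_iff) simp
  hence "(\<lambda>n. tcoeff f (Suc (Suc n)) * z ^ (Suc (Suc n))) sums (f z - tcoeff f 0 * z^0 - tcoeff f (Suc 0) * z ^ (Suc 0))"
    by (subst sums_Suc_iff[where f="\<lambda>n. tcoeff f (Suc n) * z ^ (Suc n)"]) simp
  thus ?thesis by (simp add: numeral_2_eq_2)
qed




lemma M_bound:
  fixes M :: real
  assumes M: "0 < M" and M2: "M < 1 / (2 * (ln 4 - 1))"
  shows "M * (2 * (2 * ln 2 - 1)) < 1"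
proof -
  have l4: "ln (4::real) - 1 > 0"
  proof (rule ccontr)
    assume "\<not> ln (4::real) - 1 > 0"
    hence "1 / (2 * (ln 4 - 1)) \<le> (0::real)" by (simp add: divide_nonpos_nonneg divide_nonneg_nonpos)
    thus False using M M2 by linarith
  qed
  have ln4: "ln (4::real) = 2 * ln 2" using ln_realpow[of 2 2] by simp
  have "M * (2 * (ln 4 - 1)) < 1" using M2 l4 by (simp add: field_simps)
  thus ?thesis using ln4 by simp
qed

lemma rM_eq_nonpos:
  assumes M: "0 < M" and M2: "M < 1 / (2 * (ln 4 - 1))" and r: "0 \<le> r" "r \<le> rM M"
  shows "rM_eq M r \<le> 0"
proof (cases "r = rM M")
  case True thus ?thesis using rM_props(4)[OF M M2] by simp
next
  case False
  hence "r < rM M" using r by simp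
  thus ?thesis using rM_eq_strict_mono[OF M r(1), of "rM M"] rM_props(3,4)[OF M M2] by simp
qed

lemma part2:
  assumes M: "0 < M" and M2: "M < 1 / (2 * (ln 4 - 1))" and P: "PH0 M h g" and z: "cmod z \<le> rM M"
  shows "ereal (bohr_lhs h g z) \<le> bdist (harm h g)"
proof -
  define r where "r = cmod z"
  have r0: "0 \<le> r" by (simp add: r_def)
  have r1: "r < 1" using z rM_props(3)[OF M M2] by (simp add: r_def)
  have nz: "norm z < 1" using r1 by (simp add: r_def)
  have hh: "h holomorphic_on ball 0 1" and hg: "g holomorphic_on ball 0 1"
    and h0: "h 0 = 0" and dh: "deriv h 0 = 1" and g0: "g 0 = 0" and dg: "deriv g 0 = 0"
    using P unfolding PH0_def by auto
  define a where "a = (\<lambda>m. tcoeff h (m+2))"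
  define b where "b = (\<lambda>m. tcoeff g (m+2))"
  have sh: "(\<lambda>m. a m * z ^ (m+2)) sums (h z - z)"
    using tcoeff_series[OF hh nz] h0 dh by (simp add: a_def tcoeff_def)
  have sg: "(\<lambda>m. b m * z ^ (m+2)) sums (g z)"
    using tcoeff_series[OF hg nz] g0 dg by (simp add: b_def tcoeff_def)
  define T where "T = (\<lambda>m. r ^ (m+2) / of_nat ((m+2) * (m+1)))"
  define S where "S = r + (1-r) * ln (1-r)"
  have sT: "T sums S" unfolding T_def S_def by (rule S_sums_real) (use r0 r1 in simp)
  have s2T: "(\<lambda>m. 2*M * T m) sums (2*M*S)" by (rule sums_mult[OF sT])
  define c where "c = (\<lambda>m. (norm (a m) + norm (b m)) * r ^ (m+2))"
  have cle: "c m \<le> 2*M * T m" for m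
  proof -
    have "norm (a m) + norm (b m) \<le> 2*M / (of_nat (m+2) * (of_nat (m+2) - 1))"
      unfolding a_def b_def by (rule coef_sum_bound[OF P M]) simp
    also have "\<dots> = 2*M / of_nat ((m+2)*(m+1))"
    proof -
      have "of_nat (m+2) * (of_nat (m+2) - 1) = (of_nat ((m+2)*(m+1)) :: real)" by (simp add: algebra_simps)
      thus ?thesis by simp
    qed
    finally have "(norm (a m) + norm (b m)) * r^(m+2) \<le> 2*M / of_nat ((m+2)*(m+1)) * r^(m+2)"
      using r0 by (intro mult_right_mono) auto
    thus ?thesis by (simp add: c_def T_def)
  qed
  have c0: "c m \<ge> 0" for m using r0 by (simp add: c_def)
  have smc: "summable c"
    by (rule summable_comparison_test'[OF sums_summable[OF s2T]]) (use cle c0 in auto)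
  have cS: "suminf c \<le> 2*M*S"
    using suminf_le[OF cle smc sums_summable[OF s2T]] sums_unique[OF s2T] by simp
  have na: "norm (a m * z^(m+2)) = norm (a m) * r^(m+2)" for m by (simp add: norm_mult norm_power r_def)
  have nb: "norm (b m * z^(m+2)) = norm (b m) * r^(m+2)" for m by (simp add: norm_mult norm_power r_def)
  have ca: "norm (norm (a m) * r^(m+2)) \<le> c m" for m
  proof -
    have "norm (a m) * r^(m+2) \<le> (norm (a m) + norm (b m)) * r^(m+2)"
      using r0 by (intro mult_right_mono) auto
    thus ?thesis using r0 by (simp add: c_def)
  qed
  have cb: "norm (norm (b m) * r^(m+2)) \<le> c m" for m
  proof -
    have "norm (b m) * r^(m+2) \<le> (norm (a m) + norm (b m)) * r^(m+2)"
      using r0 by (intro mult_right_mono) auto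
    thus ?thesis using r0 by (simp add: c_def)
  qed
  have sma: "summable (\<lambda>m. norm (a m) * r^(m+2))"
    by (rule summable_comparison_test'[OF smc ca])
  have smb: "summable (\<lambda>m. norm (b m) * r^(m+2))"
    by (rule summable_comparison_test'[OF smc cb])
  have eqa: "(\<lambda>m. norm (a m * z^(m+2))) = (\<lambda>m. norm (a m) * r^(m+2))" by (rule ext) (rule na)
  have eqb: "(\<lambda>m. norm (b m * z^(m+2))) = (\<lambda>m. norm (b m) * r^(m+2))" by (rule ext) (rule nb)
  have "norm (h z - z) \<le> (\<Sum>m. norm (a m * z^(m+2)))"
    unfolding sums_unique[OF sh] by (rule summable_norm) (unfold eqa, rule sma)
  hence "norm (h z - z) \<le> (\<Sum>m. norm (a m) * r^(m+2))" unfolding eqa .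
  moreover have "norm (g z) \<le> (\<Sum>m. norm (b m * z^(m+2)))"
    unfolding sums_unique[OF sg] by (rule summable_norm) (unfold eqb, rule smb)
  hence "norm (g z) \<le> (\<Sum>m. norm (b m) * r^(m+2))" unfolding eqb .
  moreover have "(\<Sum>m. norm (a m) * r^(m+2)) + (\<Sum>m. norm (b m) * r^(m+2)) = suminf c"
    unfolding c_def using suminf_add[OF sma smb] by (simp add: algebra_simps)
  moreover have "norm (harm h g z) \<le> norm (h z - z) + r + norm (g z)"
  proof -
    have "norm (harm h g z) \<le> norm (h z) + norm (cnj (g z))" unfolding harm_def by (rule norm_triangle_ineq)
    moreover have "norm (h z) \<le> norm (h z - z) + r" using norm_triangle_ineq[of "h z - z" z] by (simp add: r_def)
    ultimately show ?thesis by simp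
  qed
  ultimately have hz: "norm (harm h g z) \<le> r + suminf c" by linarith
  have bl: "bohr_lhs h g z = r + norm (harm h g z) + suminf c"
    by (simp add: bohr_lhs_def c_def a_def b_def r_def)
  have "bohr_lhs h g z \<le> 2*r + 4*M*S" using bl hz cS by linarith
  also have "\<dots> = rM_eq M r + (1 + 2*M*(1 - 2 * ln 2))" by (simp add: rM_eq_def S_def)
  also have "\<dots> \<le> 1 + 2*M*(1 - 2 * ln 2)" using rM_eq_nonpos[OF M M2 r0] z by (simp add: r_def)
  finally have "ereal (bohr_lhs h g z) \<le> ereal (1 + 2*M*(1 - 2 * ln 2))" by simp
  also have "\<dots> \<le> bdist (harm h g)" by (rule bdist_lower[OF P M])
  finally show ?thesis .
qed

lemma bdist_fM_upper:
  assumes M: "0 < M" and M2: "M < 1 / (2 * (ln 4 - 1))"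
  shows "bdist (harm (fM_h M) (\<lambda>_. 0)) \<le> ereal (1 + 2*M*(1 - 2 * ln 2))"
proof -
  define fh where "fh = harm (fM_h M) (\<lambda>_. 0)"
  define gf where "gf = (\<lambda>t::real. \<bar>-t + 2*M*(-t + (1+t) * ln (1+t))\<bar>)"
  have fh0: "fh 0 = 0" using fM_closed[of 0 M] by (simp add: fh_def harm_def)
  have fht: "cmod (fh (of_real (-t)) - fh 0) = gf t" if t: "0 < t" "t < 1" for t
  proof -
    have tt: "\<bar>-t\<bar> < 1" using t by simp
    have e: "fh (of_real (-t)) = of_real (-t + 2*M*(-t + (1 - -t)*ln(1 - -t)))"
      unfolding fh_def harm_def using fM_real[OF tt, of M] by simp
    have "cmod (fh (of_real (-t)) - fh 0) = \<bar>-t + 2*M*(-t + (1 - -t)*ln(1 - -t))\<bar>"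
      by (simp only: e fh0 diff_zero norm_of_real)
    thus ?thesis by (simp add: gf_def)
  qed
  have g1: "gf 1 = 1 + 2*M*(1 - 2 * ln 2)"
  proof -
    have "-1 + 2*M*(-1 + 2 * ln 2) \<le> 0" using M_bound[OF M M2] by (simp add: algebra_simps)
    thus ?thesis by (simp add: gf_def algebra_simps)
  qed
  have lim: "((\<lambda>t. ereal (gf t)) \<longlongrightarrow> ereal (gf 1)) (at_left 1)"
    unfolding gf_def by (intro tendsto_intros) auto
  show ?thesis unfolding bdist_def fh_def[symmetric] g1[symmetric]
  proof (rule Liminf_least)
    fix P :: "complex \<Rightarrow> bool" assume "eventually P (filtercomap norm (at_left (1::real)))"
    then obtain Q where Q: "eventually Q (at_left 1)" and QP: "\<And>x. Q (norm x) \<Longrightarrow> P x"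
      unfolding eventually_filtercomap by blast
    have ev2: "eventually (\<lambda>r::real. r \<in> {0<..<1}) (at_left 1)" by (rule eventually_at_left_real) simp
    have "eventually (\<lambda>t. (INF x\<in>Collect P. ereal (cmod (fh x - fh 0))) \<le> ereal (gf t)) (at_left 1)"
      using Q ev2
    proof (rule eventually_elim2)
      fix t :: real assume qt: "Q t" and t: "t \<in> {0<..<1}"
      have "norm (complex_of_real (-t)) = t" using t by simp
      hence "P (of_real (-t))" using QP[of "of_real (-t)"] qt by simp
      hence "(INF x\<in>Collect P. ereal (cmod (fh x - fh 0))) \<le> ereal (cmod (fh (of_real (-t)) - fh 0))"
        by (intro INF_lower) simp
      thus "(INF x\<in>Collect P. ereal (cmod (fh x - fh 0))) \<le> ereal (gf t)" using fht t by simp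
    qed
    thus "(INF x\<in>Collect P. ereal (cmod (fh x - fh 0))) \<le> ereal (gf 1)"
      by (intro tendsto_lowerbound[OF lim]) auto
  qed
qed

lemma part4:
  assumes M: "0 < M" and M2: "M < 1 / (2 * (ln 4 - 1))" and \<rho>: "rM M < \<rho>" "\<rho> < 1"
  shows "\<exists>z. cmod z = \<rho> \<and> ereal (bohr_lhs (fM_h M) (\<lambda>_. 0) z) > bdist (harm (fM_h M) (\<lambda>_. 0))"
proof (intro exI conjI)
  have r0: "0 < \<rho>" using \<rho> rM_props(2)[OF M M2] by simp
  show nz: "cmod (complex_of_real \<rho>) = \<rho>" using r0 by simp
  define S where "S = \<rho> + (1-\<rho>) * ln (1-\<rho>)"
  have sT: "(\<lambda>m. \<rho> ^ (m+2) / of_nat ((m+2) * (m+1))) sums S" unfolding S_def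
    by (rule S_sums_real) (use r0 \<rho> in simp)
  have s2T: "(\<lambda>m. 2*M * (\<rho> ^ (m+2) / of_nat ((m+2) * (m+1)))) sums (2*M*S)" by (rule sums_mult[OF sT])
  have tc: "(cmod (tcoeff (fM_h M) (m+2)) + cmod (tcoeff (\<lambda>_. 0) (m+2))) * cmod (complex_of_real \<rho>) ^ (m+2)
      = 2*M * (\<rho> ^ (m+2) / of_nat ((m+2) * (m+1)))" for m
  proof -
    have "tcoeff (fM_h M) (m+2) = 2 * of_real M / of_nat ((m+2) * (m+2-1))" by (rule tcoeff_fM) simp
    also have "\<dots> = complex_of_real (2*M / real ((m+2) * (m+1)))" by simp
    finally have "cmod (tcoeff (fM_h M) (m+2)) = \<bar>2*M / real ((m+2) * (m+1))\<bar>"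
      by (simp only: norm_of_real)
    hence "cmod (tcoeff (fM_h M) (m+2)) = 2*M / of_nat ((m+2) * (m+1))"
      using M by simp
    moreover have "tcoeff (\<lambda>_. 0) (m+2) = 0" by (simp add: tcoeff_def)
    ultimately show ?thesis using nz by simp
  qed
  have sumeq: "(\<Sum>n. (cmod (tcoeff (fM_h M) (n+2)) + cmod (tcoeff (\<lambda>_. 0) (n+2))) * cmod (complex_of_real \<rho>) ^ (n+2)) = 2*M*S"
    using sums_unique[OF s2T] tc by simp
  have fr: "harm (fM_h M) (\<lambda>_. 0) (of_real \<rho>) = of_real (\<rho> + 2*M*S)"
    using fM_real[of \<rho> M] r0 \<rho> by (simp add: harm_def S_def)
  have hr: "cmod (harm (fM_h M) (\<lambda>_. 0) (of_real \<rho>)) \<ge> \<rho> + 2*M*S"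
    unfolding fr norm_of_real by simp
  have bl: "bohr_lhs (fM_h M) (\<lambda>_. 0) (of_real \<rho>) = cmod (complex_of_real \<rho>) + cmod (harm (fM_h M) (\<lambda>_. 0) (of_real \<rho>)) + 2*M*S"
    unfolding bohr_lhs_def sumeq ..
  have "bohr_lhs (fM_h M) (\<lambda>_. 0) (of_real \<rho>) \<ge> 2*\<rho> + 4*M*S"
    using bl hr nz by linarith
  moreover have "2*\<rho> + 4*M*S = rM_eq M \<rho> + (1 + 2*M*(1 - 2 * ln 2))" by (simp add: rM_eq_def S_def)
  moreover have "rM_eq M \<rho> > 0"
    using rM_eq_strict_mono[OF M _ \<rho>] rM_props(2,4)[OF M M2] by simp
  ultimately have "bohr_lhs (fM_h M) (\<lambda>_. 0) (of_real \<rho>) > 1 + 2*M*(1 - 2 * ln 2)" by linarith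
  hence lt: "ereal (1 + 2*M*(1 - 2 * ln 2)) < ereal (bohr_lhs (fM_h M) (\<lambda>_. 0) (of_real \<rho>))" by simp
  show "ereal (bohr_lhs (fM_h M) (\<lambda>_. 0) (of_real \<rho>)) > bdist (harm (fM_h M) (\<lambda>_. 0))"
    by (rule order_le_less_trans[OF bdist_fM_upper[OF M M2] lt])
qed

theorem theorem2p1:
  fixes M :: real and h g :: "complex \<Rightarrow> complex"
  assumes "0 < M" and "M < 1 / (2 * (ln 4 - 1))" and "PH0 M h g"
  shows "(\<exists>!r. 0 < r \<and> r < 1 \<and> rM_eq M r = 0)
    \<and> (\<forall>z. cmod z \<le> rM M \<longrightarrow> ereal (bohr_lhs h g z) \<le> bdist (harm h g))
    \<and> PH0 M (fM_h M) (\<lambda>_. 0)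
    \<and> (\<forall>\<rho>. rM M < \<rho> \<and> \<rho> < 1 \<longrightarrow>
         (\<exists>z. cmod z = \<rho> \<and> ereal (bohr_lhs (fM_h M) (\<lambda>_. 0) z) > bdist (harm (fM_h M) (\<lambda>_. 0))))"
proof (intro conjI allI impI)
  show "\<exists>!r. 0 < r \<and> r < 1 \<and> rM_eq M r = 0" by (rule rM_props(1)[OF assms(1,2)])
  show "PH0 M (fM_h M) (\<lambda>_. 0)" by (rule PH0_fM[OF assms(1)])
  fix z :: complex assume "cmod z \<le> rM M"
  thus "ereal (bohr_lhs h g z) \<le> bdist (harm h g)" by (rule part2[OF assms])
next
  fix \<rho> :: real assume "rM M < \<rho> \<and> \<rho> < 1"
  thus "\<exists>z. cmod z = \<rho> \<and> ereal (bohr_lhs (fM_h M) (\<lambda>_. 0) z) > bdist (harm (fM_h M) (\<lambda>_. 0))"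
    using part4[OF assms(1,2)] by blast
qed


end
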